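(* Let $p(x)\in\mathbb{Q}[x]$ be a polynomial with positive leading coefficient and $p(0)=0$. Then the set $\mathbb{N}\cap\{p(n):n\in\mathbb{N}\}$ is large.
   Context: A set $D\subseteq\mathbb{N}$ is $r$-large if for every $r$-coloring of $\mathbb{N}$ and every $k\ge1$ there is a monochromatic arithmetic progression $a,a+d,\dots,a+(k-1)d$ in $\mathbb{N}$ with $d\in D$; it is large if it is $r$-large for every $r\in\mathbb{N}$. (One may use the known fact that this holds for polynomials with integer coefficients, positive leading coefficient and zero constant term.) *)

theory Defs
  imports "HOL-Computational_Algebra.Polynomial"
begin

text \<open>Convention: \<nat> = {1,2,3,...} (positive integers).\<close>

definition r_large :: "nat \<Rightarrow> nat set \<Rightarrow> bool" where
  "r_large r D \<longleftrightarrow>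
     (\<forall>chi :: nat \<Rightarrow> nat. (\<forall>x. chi x < r) \<longrightarrow>
        (\<forall>k \<ge> 1. \<exists>a d. a \<ge> 1 \<and> d \<in> D \<and> (\<forall>i < k. chi (a + i * d) = chi a)))"

definition large :: "nat set \<Rightarrow> bool" where
  "large D \<longleftrightarrow> (\<forall>r \<ge> 1. r_large r D)"

end

theory Submission
  imports Defs "HOL-Library.Multiset_Order" "HOL-Library.Countable"
begin

lemma poly_of_int_map:
  "poly (map_poly (of_int :: int \<Rightarrow> 'a::comm_ring_1) q) (of_int x) = of_int (poly q x)"
  by (induction q) (simp_all add: map_poly_pCons)

definition sh :: "int poly \<Rightarrow> int poly \<Rightarrow> int \<Rightarrow> int poly" where
  "sh p q y = pcompose q [:y, 1:] - [:poly q y:] - p"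

lemma poly_sh: "poly (sh p q y) x = poly q (y + x) - poly q y - poly p x"
  by (simp add: sh_def poly_pcompose)

lemma degree_shift: "degree (pcompose q [:y, 1::int:]) = degree q"
  by (simp add: degree_pcompose)

lemma lc_shift: "lead_coeff (pcompose q [:y, 1::int:]) = lead_coeff q"
  by (simp add: lead_coeff_comp)

lemma sh_facts:
  assumes "degree p \<ge> 1" "degree p \<le> degree q"
  shows "degree (sh p q y) \<le> degree q"
    and "coeff (sh p q y) (degree q) = lead_coeff q - (if degree q = degree p then lead_coeff p else 0)"
proof -
  have d1: "degree (pcompose q [:y, 1:] - [:poly q y:]) \<le> degree q"
    by (rule degree_diff_le) (auto simp: degree_shift)
  show "degree (sh p q y) \<le> degree q"
    unfolding sh_def by (rule degree_diff_le[OF d1]) (use assms in auto)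
  have "coeff (sh p q y) (degree q) = coeff (pcompose q [:y, 1:]) (degree q) - coeff [:poly q y:] (degree q) - coeff p (degree q)"
    by (simp add: sh_def)
  also have "coeff (pcompose q [:y, 1:]) (degree q) = lead_coeff q"
    using lc_shift[of q y] degree_shift[of q y] by simp
  also have "coeff [:poly q y:] (degree q) = 0" using assms by (auto simp: coeff_pCons split: nat.split)
  also have "coeff p (degree q) = (if degree q = degree p then lead_coeff p else 0)"
    using assms by (auto simp: coeff_eq_0)
  finally show "coeff (sh p q y) (degree q) = lead_coeff q - (if degree q = degree p then lead_coeff p else 0)" by simp
qed

definition cls :: "int poly set \<Rightarrow> nat \<Rightarrow> int set" where
  "cls P j = {c. \<exists>q\<in>P. q \<noteq> 0 \<and> degree q = j \<and> lead_coeff q = c}"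

definition wt :: "int poly set \<Rightarrow> nat multiset" where
  "wt P = image_mset fst (mset_set ((\<lambda>q. (degree q, lead_coeff q)) ` {q\<in>P. q \<noteq> 0}))"

lemma finite_cls: "finite P \<Longrightarrow> finite (cls P j)"
  by (rule finite_subset[of _ "lead_coeff ` P"]) (auto simp: cls_def)

lemma count_wt: assumes "finite P" shows "count (wt P) j = card (cls P j)"
proof -
  let ?S = "(\<lambda>q. (degree q, lead_coeff q)) ` {q\<in>P. q \<noteq> 0}"
  have fS: "finite ?S" using assms by auto
  have "count (wt P) j = (\<Sum>y\<in>fst -` {j} \<inter> ?S. 1)"
    unfolding wt_def count_image_mset using fS by (intro sum.cong) auto
  also have "\<dots> = card (fst -` {j} \<inter> ?S)" by simp
  also have "fst -` {j} \<inter> ?S = Pair j ` cls P j" by (auto simp: cls_def image_iff)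
  also have "card \<dots> = card (cls P j)" by (rule card_image) (auto simp: inj_on_def)
  finally show ?thesis .
qed

definition Qs :: "int poly set \<Rightarrow> int poly \<Rightarrow> int set \<Rightarrow> int poly set" where
  "Qs P p Y = {sh p q y | q y. q \<in> P \<and> q \<noteq> 0 \<and> y \<in> Y}"

lemma wt_less:
  assumes fin: "finite P" "finite Y" and pP: "p \<in> P" "p \<noteq> 0" and dp: "degree p \<ge> 1"
    and mindeg: "\<And>q. q \<in> P \<Longrightarrow> q \<noteq> 0 \<Longrightarrow> degree p \<le> degree q"
  shows "wt (Qs P p Y) < wt P"
proof -
  have finQ: "finite (Qs P p Y)"
  proof -
    have "Qs P p Y \<subseteq> (\<lambda>(q,y). sh p q y) ` (P \<times> Y)" by (auto simp: Qs_def)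
    thus ?thesis by (rule finite_subset) (use fin in auto)
  qed
  have hi: "cls (Qs P p Y) j \<subseteq> cls P j" if "j > degree p" for j
  proof
    fix c assume "c \<in> cls (Qs P p Y) j"
    then obtain q y where q: "q \<in> P" "q \<noteq> 0" "y \<in> Y" "sh p q y \<noteq> 0" "degree (sh p q y) = j"
      "lead_coeff (sh p q y) = c" by (auto simp: cls_def Qs_def)
    have dq: "degree p \<le> degree q" using mindeg q by auto
    note f = sh_facts[OF dp dq, of y]
    have "degree q > degree p" using f(1) q(5) that by linarith
    hence co: "coeff (sh p q y) (degree q) = lead_coeff q" using f(2) by simp
    have "lead_coeff q \<noteq> 0" using q by simp
    hence "degree q \<le> degree (sh p q y)" using co by (intro le_degree) simp
    hence "degree (sh p q y) = degree q" using f(1) by linarith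
    thus "c \<in> cls P j" using q co by (auto simp: cls_def)
  qed
  have mid: "cls (Qs P p Y) (degree p) \<subseteq> (\<lambda>c. c - lead_coeff p) ` (cls P (degree p) - {lead_coeff p})"
  proof
    fix c assume "c \<in> cls (Qs P p Y) (degree p)"
    then obtain q y where q: "q \<in> P" "q \<noteq> 0" "y \<in> Y" "sh p q y \<noteq> 0" "degree (sh p q y) = degree p"
      "lead_coeff (sh p q y) = c" by (auto simp: cls_def Qs_def)
    have dq: "degree p \<le> degree q" using mindeg q by auto
    note f = sh_facts[OF dp dq, of y]
    show "c \<in> (\<lambda>c. c - lead_coeff p) ` (cls P (degree p) - {lead_coeff p})"
    proof (cases "degree q = degree p")
      case True
      hence co: "coeff (sh p q y) (degree q) = lead_coeff q - lead_coeff p" using f(2) by simp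
      have "lead_coeff (sh p q y) \<noteq> 0" using q(4) by simp
      hence "lead_coeff q \<noteq> lead_coeff p"
        using co q(5) True by auto
      moreover have "c = lead_coeff q - lead_coeff p" using co q True by simp
      ultimately show ?thesis using q True by (auto simp: cls_def image_iff)
    next
      case False
      hence gt: "degree q > degree p" using dq by simp
      hence co: "coeff (sh p q y) (degree q) = lead_coeff q" using f(2) by simp
      have "lead_coeff q \<noteq> 0" using q by simp
      hence "degree q \<le> degree (sh p q y)" using co by (intro le_degree) simp
      thus ?thesis using q(5) gt by simp
    qed
  qed
  have lp: "lead_coeff p \<in> cls P (degree p)" using pP by (auto simp: cls_def)
  have cmid: "card (cls (Qs P p Y) (degree p)) < card (cls P (degree p))"
  proof -
    have "card (cls (Qs P p Y) (degree p)) \<le> card ((\<lambda>c. c - lead_coeff p) ` (cls P (degree p) - {lead_coeff p}))"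
      by (rule card_mono[OF _ mid]) (use finite_cls[OF fin(1)] in auto)
    also have "\<dots> \<le> card (cls P (degree p) - {lead_coeff p})" by (rule card_image_le) (use finite_cls[OF fin(1)] in auto)
    also have "\<dots> < card (cls P (degree p))"
      using lp finite_cls[OF fin(1)] by (meson card_Diff1_less)
    finally show ?thesis .
  qed
  show ?thesis
    unfolding less_multiset_less_multiset\<^sub>H\<^sub>O less_multiset\<^sub>H\<^sub>O_def
  proof (intro conjI allI impI)
    show "wt (Qs P p Y) \<noteq> wt P"
    proof
      assume "wt (Qs P p Y) = wt P"
      hence "count (wt (Qs P p Y)) (degree p) = count (wt P) (degree p)" by simp
      thus False using cmid count_wt[OF finQ] count_wt[OF fin(1)] by simp
    qed
  next
    fix y assume "count (wt P) y < count (wt (Qs P p Y)) y"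
    hence a: "card (cls P y) < card (cls (Qs P p Y) y)" using count_wt[OF finQ] count_wt[OF fin(1)] by simp
    have "y < degree p"
    proof (rule ccontr)
      assume "\<not> y < degree p"
      hence "y = degree p \<or> y > degree p" by auto
      thus False
      proof
        assume "y > degree p"
        hence "card (cls (Qs P p Y) y) \<le> card (cls P y)"
          using hi finite_cls[OF fin(1)] by (intro card_mono) auto
        thus False using a by simp
      qed (use a cmid in simp)
    qed
    thus "\<exists>x>y. count (wt (Qs P p Y)) x < count (wt P) x"
      using cmid count_wt[OF finQ] count_wt[OF fin(1)] by auto
  qed
qed

definition succ :: "int poly set \<Rightarrow> int \<Rightarrow> int \<Rightarrow> (int \<Rightarrow> nat) \<Rightarrow> bool" where
  "succ P L N \<chi> \<longleftrightarrow> (\<exists>a d. \<bar>a\<bar> \<le> N \<and> L \<le> d \<and> d \<le> N \<and> (\<forall>q\<in>P. \<chi> (a + poly q d) = \<chi> a))"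

definition good :: "int poly set \<Rightarrow> bool" where
  "good P \<longleftrightarrow> (\<forall>F. finite F \<longrightarrow> (\<forall>L\<ge>0. \<exists>N\<ge>0. \<forall>\<chi>. range \<chi> \<subseteq> F \<longrightarrow> succ P L N \<chi>))"

definition struct :: "int poly set \<Rightarrow> int poly \<Rightarrow> int \<Rightarrow> int \<Rightarrow> (int \<Rightarrow> nat) \<Rightarrow> nat \<Rightarrow> bool" where
  "struct P p L N \<chi> s \<longleftrightarrow> (\<exists>a e. \<bar>a\<bar> \<le> N \<and> (\<forall>i<s. L \<le> e i \<and> e i \<le> N) \<and>
     (\<forall>i<s. \<forall>q\<in>P. q \<noteq> 0 \<longrightarrow> \<chi> (a + poly q (e i)) = \<chi> (a + poly p (e i))) \<and>
     inj_on (\<lambda>i. \<chi> (a + poly p (e i))) {..<s})"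

lemma sum_bound:
  fixes f :: "'a \<Rightarrow> 'b \<Rightarrow> int"
  assumes "finite A" "finite B" "x \<in> A" "y \<in> B"
  shows "\<bar>f x y\<bar> \<le> (\<Sum>x\<in>A. \<Sum>y\<in>B. \<bar>f x y\<bar>)"
proof -
  have "\<bar>f x y\<bar> \<le> (\<Sum>y\<in>B. \<bar>f x y\<bar>)" by (rule member_le_sum) (use assms in auto)
  also have "\<dots> \<le> (\<Sum>x\<in>A. \<Sum>y\<in>B. \<bar>f x y\<bar>)"
    by (rule member_le_sum[where f = "\<lambda>x. \<Sum>y\<in>B. \<bar>f x y\<bar>"]) (use assms in \<open>auto intro: sum_nonneg\<close>)
  finally show ?thesis .
qed

lemma focus:
  assumes P0: "\<forall>q\<in>P. poly q 0 = 0" and finP: "finite P" and pP: "p \<in> P" "p \<noteq> 0"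
    and IH: "\<And>Y. finite Y \<Longrightarrow> good (Qs P p Y)"
  shows "good P"
  unfolding good_def
proof (intro allI impI)
  fix F :: "nat set" and L :: int assume F: "finite F" and L: "0 \<le> L"
  have p0: "poly p 0 = 0" using P0 pP by auto
  have claim: "\<exists>N\<ge>0. \<forall>\<chi>. range \<chi> \<subseteq> F \<longrightarrow> succ P L N \<chi> \<or> struct P p L N \<chi> s" for s
  proof (induction s)
    case 0
    show ?case by (intro exI[of _ 0]) (auto simp: struct_def)
  next
    case (Suc s)
    then obtain Ns where Ns0: "Ns \<ge> 0" and Ns: "\<And>\<chi>. range \<chi> \<subseteq> F \<Longrightarrow> succ P L Ns \<chi> \<or> struct P p L Ns \<chi> s"
      by blast
    define B where "B = (\<Sum>q\<in>P. \<Sum>y\<in>{0..Ns}. \<bar>poly q y\<bar>)"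
    have B: "\<bar>poly q y\<bar> \<le> B" if "q \<in> P" "0 \<le> y" "y \<le> Ns" for q y
      unfolding B_def by (rule sum_bound[where f = "\<lambda>q y. poly q y"]) (use that finP in auto)
    have B0: "0 \<le> B" unfolding B_def by (intro sum_nonneg) auto
    define W where "W = Ns + B"
    define F' where "F' = to_nat ` {xs. set xs \<subseteq> F \<and> length xs = length [-W..W]}"
    have finF': "finite F'" unfolding F'_def using F by (intro finite_imageI finite_lists_length_eq)
    have "good (Qs P p {0..Ns})" by (rule IH) simp
    then obtain N' where N'0: "N' \<ge> 0" and N': "\<And>\<chi>. range \<chi> \<subseteq> F' \<Longrightarrow> succ (Qs P p {0..Ns}) L N' \<chi>"
      using finF' L unfolding good_def by blast
    define B' where "B' = (\<Sum>y\<in>{0..N'}. \<bar>poly p y\<bar>)"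
    have B': "\<bar>poly p y\<bar> \<le> B'" if "0 \<le> y" "y \<le> N'" for y
      unfolding B'_def by (rule member_le_sum) (use that in auto)
    have B'0: "0 \<le> B'" unfolding B'_def by (intro sum_nonneg) auto
    show ?case
    proof (intro exI[of _ "Ns + N' + B'"] conjI allI impI)
      show "0 \<le> Ns + N' + B'" using Ns0 N'0 B'0 by simp
      fix \<chi> :: "int \<Rightarrow> nat" assume \<chi>: "range \<chi> \<subseteq> F"
      define \<chi>' where "\<chi>' = (\<lambda>t. to_nat (map (\<lambda>j. \<chi> (t + j)) [-W..W]))"
      have "range \<chi>' \<subseteq> F'" unfolding \<chi>'_def F'_def
      proof (rule image_subsetI, rule imageI, intro CollectI conjI)
        fix t show "set (map (\<lambda>j. \<chi> (t + j)) [-W..W]) \<subseteq> F" using \<chi> by auto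
      qed simp
      from N'[OF this] obtain t d where td: "\<bar>t\<bar> \<le> N'" "L \<le> d" "d \<le> N'"
        "\<forall>q'\<in>Qs P p {0..Ns}. \<chi>' (t + poly q' d) = \<chi>' t" unfolding succ_def by blast
      have key: "\<chi> (t + poly q' d + j) = \<chi> (t + j)" if "q' \<in> Qs P p {0..Ns}" "\<bar>j\<bar> \<le> W" for q' j
      proof -
        from td(4) that(1) have "\<chi>' (t + poly q' d) = \<chi>' t" by blast
        hence "map (\<lambda>j. \<chi> (t + poly q' d + j)) [-W..W] = map (\<lambda>j. \<chi> (t + j)) [-W..W]"
          unfolding \<chi>'_def using inj_to_nat injD by metis
        moreover have "j \<in> {-W..W}" using that(2) by auto
        ultimately show ?thesis by (simp add: map_eq_conv)
      qed
      have "range (\<lambda>x. \<chi> (x + t)) \<subseteq> F" using \<chi> by auto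
      from Ns[OF this]
      show "succ P L (Ns + N' + B') \<chi> \<or> struct P p L (Ns + N' + B') \<chi> (Suc s)"
      proof
        assume "succ P L Ns (\<lambda>x. \<chi> (x + t))"
        then obtain a d0 where ad: "\<bar>a\<bar> \<le> Ns" "L \<le> d0" "d0 \<le> Ns" "\<forall>q\<in>P. \<chi> (a + poly q d0 + t) = \<chi> (a + t)"
          unfolding succ_def by blast
        have "succ P L (Ns + N' + B') \<chi>" unfolding succ_def
          by (rule exI[of _ "a + t"], rule exI[of _ d0]) (use ad(1-3) td(1) N'0 B'0 ad(4) in \<open>simp_all add: add_ac\<close>)
        thus ?thesis ..
      next
        assume "struct P p L Ns (\<lambda>x. \<chi> (x + t)) s"
        then obtain a0 e where ae: "\<bar>a0\<bar> \<le> Ns" "\<forall>i<s. L \<le> e i \<and> e i \<le> Ns"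
          "\<forall>i<s. \<forall>q\<in>P. q \<noteq> 0 \<longrightarrow> \<chi> (a0 + poly q (e i) + t) = \<chi> (a0 + poly p (e i) + t)"
          "inj_on (\<lambda>i. \<chi> (a0 + poly p (e i) + t)) {..<s}"
          unfolding struct_def by blast
        have ae3: "\<chi> (t + a0 + poly q (e i)) = \<chi> (t + a0 + poly p (e i))" if "i < s" "q \<in> P" "q \<noteq> 0" for i q
        proof -
          have "\<chi> (a0 + poly q (e i) + t) = \<chi> (a0 + poly p (e i) + t)" using ae(3) that by blast
          moreover have "a0 + poly q (e i) + t = t + a0 + poly q (e i)" "a0 + poly p (e i) + t = t + a0 + poly p (e i)"
            by simp_all
          ultimately show ?thesis by metis
        qed
        show ?thesis
        proof (cases "\<exists>i<s. \<chi> (t + a0 + poly p (e i)) = \<chi> (t + a0)")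
          case True
          then obtain i where i: "i < s" "\<chi> (t + a0 + poly p (e i)) = \<chi> (t + a0)" by blast
          have "succ P L (Ns + N' + B') \<chi>" unfolding succ_def
          proof (rule exI[of _ "t + a0"], rule exI[of _ "e i"], intro conjI ballI)
            fix q assume q: "q \<in> P"
            show "\<chi> (t + a0 + poly q (e i)) = \<chi> (t + a0)"
            proof (cases "q = 0")
              case False thus ?thesis using ae3[OF i(1) q False] i(2) by simp
            qed simp
          qed (use ae(1) ae(2)[rule_format, OF i(1)] td(1) N'0 B'0 in auto)
          thus ?thesis ..
        next
          case False
          define a' where "a' = t + a0 - poly p d"
          define e' where "e' = (\<lambda>i. if i < s then e i + d else d)"
          have gen: "\<chi> (a' + poly q (e' i)) = \<chi> (t + a0 + poly p (e i))"
            if i: "i < s" and q: "q \<in> P" "q \<noteq> 0" for i q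
          proof -
            have ei: "e i \<in> {0..Ns}" using ae(2) i L by auto
            hence q': "sh p q (e i) \<in> Qs P p {0..Ns}" using q unfolding Qs_def by blast
            have j: "\<bar>a0 + poly q (e i)\<bar> \<le> W" using B[OF q(1), of "e i"] ei ae(1) unfolding W_def by auto
            have "a' + poly q (e' i) = t + poly (sh p q (e i)) d + (a0 + poly q (e i))"
              unfolding a'_def e'_def poly_sh using i by (simp add: add_ac)
            hence "\<chi> (a' + poly q (e' i)) = \<chi> (t + (a0 + poly q (e i)))" using key[OF q' j] by simp
            also have "t + (a0 + poly q (e i)) = t + a0 + poly q (e i)" by simp
            also have "\<chi> \<dots> = \<chi> (t + a0 + poly p (e i))" using ae3[OF i q] .
            finally show ?thesis .
          qed
          have gen2: "\<chi> (a' + poly q (e' s)) = \<chi> (t + a0)" if q: "q \<in> P" "q \<noteq> 0" for q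
          proof -
            have q': "sh p q 0 \<in> Qs P p {0..Ns}" using q Ns0 unfolding Qs_def by force
            have j: "\<bar>a0\<bar> \<le> W" using ae(1) B0 unfolding W_def by auto
            have q0: "poly q 0 = 0" using P0 q by auto
            have "a' + poly q (e' s) = t + poly (sh p q 0) d + a0"
              unfolding a'_def e'_def poly_sh using q0 by simp
            thus ?thesis using key[OF q' j] by simp
          qed
          have col: "\<chi> (a' + poly p (e' i)) = (if i < s then \<chi> (t + a0 + poly p (e i)) else \<chi> (t + a0))"
            if "i < Suc s" for i
            using gen[OF _ pP] gen2[OF pP] that by (cases "i < s") (auto simp: less_Suc_eq)
          have pd: "\<bar>poly p d\<bar> \<le> B'" by (rule B') (use td L in auto)
          have "struct P p L (Ns + N' + B') \<chi> (Suc s)" unfolding struct_def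
          proof (rule exI[of _ a'], rule exI[of _ e'], intro conjI allI impI ballI)
            show "\<bar>a'\<bar> \<le> Ns + N' + B'" unfolding a'_def using ae(1) td(1) pd by arith
          next
            fix i assume i: "i < Suc s"
            have "L \<le> e' i \<and> e' i \<le> Ns + N' + B'"
            proof (cases "i < s")
              case True
              hence "L \<le> e i" "e i \<le> Ns" using ae(2) by auto
              thus ?thesis using True td(2,3) L B'0 unfolding e'_def by simp
            next
              case False
              thus ?thesis using td(2,3) L B'0 Ns0 unfolding e'_def by simp
            qed
            thus "L \<le> e' i" "e' i \<le> Ns + N' + B'" by auto
          next
            fix i q assume i: "i < Suc s" and q: "q \<in> P" "q \<noteq> 0"
            show "\<chi> (a' + poly q (e' i)) = \<chi> (a' + poly p (e' i))"
            proof (cases "i < s")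
              case True thus ?thesis using gen[OF True q] gen[OF True pP] by simp
            next
              case False hence "i = s" using i by simp
              thus ?thesis using gen2[OF q] gen2[OF pP] by simp
            qed
          next
            let ?c = "\<lambda>i. if i < s then \<chi> (t + a0 + poly p (e i)) else \<chi> (t + a0)"
            have inj0: "inj_on (\<lambda>i. \<chi> (t + a0 + poly p (e i))) {..<s}"
            proof -
              have "(\<lambda>i. \<chi> (a0 + poly p (e i) + t)) = (\<lambda>i. \<chi> (t + a0 + poly p (e i)))"
                by (simp add: add_ac)
              thus ?thesis using ae(4) by simp
            qed
            have inj1: "inj_on ?c {..<s}"
              by (rule inj_on_cong[THEN iffD1, OF _ inj0]) simp
            have nin: "?c s \<notin> ?c ` ({..<s} - {s})" using False by auto
            have "inj_on ?c (insert s {..<s})" using inj1 nin by (simp only: inj_on_insert) simp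
            moreover have "insert s {..<s} = {..<Suc s}" by auto
            ultimately have "inj_on ?c {..<Suc s}" by simp
            moreover have "inj_on (\<lambda>i. \<chi> (a' + poly p (e' i))) {..<Suc s} = inj_on ?c {..<Suc s}"
              by (rule inj_on_cong) (use col in blast)
            ultimately show "inj_on (\<lambda>i. \<chi> (a' + poly p (e' i))) {..<Suc s}" by simp
          qed
          thus ?thesis ..
        qed
      qed
    qed
  qed
  from claim[of "Suc (card F)"] obtain N where N: "N \<ge> 0"
    "\<And>\<chi>. range \<chi> \<subseteq> F \<Longrightarrow> succ P L N \<chi> \<or> struct P p L N \<chi> (Suc (card F))" by blast
  show "\<exists>N\<ge>0. \<forall>\<chi>. range \<chi> \<subseteq> F \<longrightarrow> succ P L N \<chi>"
  proof (intro exI[of _ N] conjI allI impI)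
    fix \<chi> :: "int \<Rightarrow> nat" assume \<chi>: "range \<chi> \<subseteq> F"
    have "\<not> struct P p L N \<chi> (Suc (card F))"
    proof
      assume "struct P p L N \<chi> (Suc (card F))"
      then obtain a e where inj: "inj_on (\<lambda>i. \<chi> (a + poly p (e i))) {..<Suc (card F)}"
        unfolding struct_def by blast
      have "card {..<Suc (card F)} \<le> card F"
        by (rule card_inj_on_le[OF inj]) (use \<chi> F in auto)
      thus False by simp
    qed
    thus "succ P L N \<chi>" using N(2)[OF \<chi>] by blast
  qed (use N in auto)
qed


lemma Qs_fin: "finite P \<Longrightarrow> finite Y \<Longrightarrow> finite (Qs P p Y)"
proof -
  assume fin: "finite P" "finite Y"
  have "Qs P p Y \<subseteq> (\<lambda>(q,y). sh p q y) ` (P \<times> Y)" by (auto simp: Qs_def)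
  thus ?thesis by (rule finite_subset) (use fin in auto)
qed

lemma Qs_zero: "poly p 0 = 0 \<Longrightarrow> \<forall>q\<in>Qs P p Y. poly q 0 = 0"
  by (auto simp: Qs_def poly_sh)

lemma good_all: "finite P \<Longrightarrow> \<forall>q\<in>P. poly q 0 = 0 \<Longrightarrow> good P"
proof (induction "wt P" arbitrary: P rule: less_induct)
  case (less P)
  show ?case
  proof (cases "\<exists>q\<in>P. q \<noteq> 0")
    case False
    show ?thesis unfolding good_def succ_def
    proof (intro allI impI)
      fix F :: "nat set" and L :: int assume "finite F" "0 \<le> L"
      show "\<exists>N\<ge>0. \<forall>\<chi>. range \<chi> \<subseteq> F \<longrightarrow>
               (\<exists>a d. \<bar>a\<bar> \<le> N \<and> L \<le> d \<and> d \<le> N \<and> (\<forall>q\<in>P. \<chi> (a + poly q d) = \<chi> a))"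
        by (rule exI[of _ L], intro conjI allI impI exI[of _ 0] exI[of _ L]) (use False \<open>0 \<le> L\<close> in auto)
    qed
  next
    case True
    let ?D = "degree ` {q\<in>P. q \<noteq> 0}"
    have finD: "finite ?D" using less.prems by auto
    have neD: "?D \<noteq> {}" using True by auto
    obtain p where p: "p \<in> P" "p \<noteq> 0" "degree p = Min ?D"
      using Min_in[OF finD neD] by auto
    have mind: "degree p \<le> degree q" if "q \<in> P" "q \<noteq> 0" for q
      using p(3) Min_le[OF finD] that by auto
    have p0: "poly p 0 = 0" using less.prems p by auto
    have dp: "degree p \<ge> 1"
    proof (rule ccontr)
      assume "\<not> 1 \<le> degree p"
      hence "degree p = 0" by simp
      hence "p = [:coeff p 0:]" by (metis degree_0_id)
      also have "coeff p 0 = 0" using p0 by (simp add: poly_0_coeff_0)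
      finally show False using p(2) by simp
    qed
    show ?thesis
    proof (rule focus[OF less.prems(2) less.prems(1) p(1,2)])
      fix Y :: "int set" assume Y: "finite Y"
      show "good (Qs P p Y)"
      proof (rule less.hyps)
        show "wt (Qs P p Y) < wt P" by (rule wt_less[OF less.prems(1) Y p(1,2) dp mind])
        show "finite (Qs P p Y)" by (rule Qs_fin[OF less.prems(1) Y])
        show "\<forall>q\<in>Qs P p Y. poly q 0 = 0" by (rule Qs_zero[OF p0])
      qed
    qed
  qed
qed



lemma large_from:
  fixes qi :: "int poly" and D :: "nat set"
  assumes q0: "poly qi 0 = 0" and L0: "L \<ge> 0" and pos: "\<And>d. d \<ge> L \<Longrightarrow> poly qi d \<ge> 1 \<and> nat (poly qi d) \<in> D"
  shows "large D"
  unfolding large_def r_large_def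
proof (intro allI impI)
  fix r :: nat and chi :: "nat \<Rightarrow> nat" and k :: nat
  assume r: "1 \<le> r" and chi: "\<forall>x. chi x < r" and k: "1 \<le> k"
  define P where "P = (\<lambda>i. smult (int i) qi) ` {..<k}"
  have "good P" by (rule good_all) (auto simp: P_def q0)
  then obtain N where N0: "N \<ge> 0" and N: "\<And>\<chi>. range \<chi> \<subseteq> {..<r} \<Longrightarrow> succ P L N \<chi>"
    using L0 unfolding good_def by (meson finite_lessThan)
  define T where "T = N + 1"
  define \<chi> where "\<chi> = (\<lambda>x. chi (nat (x + T)))"
  have "range \<chi> \<subseteq> {..<r}" using chi by (auto simp: \<chi>_def)
  from N[OF this] obtain a d where ad: "\<bar>a\<bar> \<le> N" "L \<le> d" "d \<le> N" "\<forall>q\<in>P. \<chi> (a + poly q d) = \<chi> a"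
    unfolding succ_def by blast
  have Q: "poly qi d \<ge> 1" "nat (poly qi d) \<in> D" using pos[OF ad(2)] by auto
  show "\<exists>a d. 1 \<le> a \<and> d \<in> D \<and> (\<forall>i<k. chi (a + i * d) = chi a)"
  proof (rule exI[of _ "nat (a + T)"], rule exI[of _ "nat (poly qi d)"], intro conjI allI impI)
    have "a + T \<ge> 1" using ad(1) unfolding T_def by arith
    thus "1 \<le> nat (a + T)" by simp
    show "nat (poly qi d) \<in> D" by (rule Q(2))
    fix i assume i: "i < k"
    have "smult (int i) qi \<in> P" using i by (auto simp: P_def)
    hence "\<chi> (a + int i * poly qi d) = \<chi> a" using ad(4) by auto
    moreover have "nat (a + int i * poly qi d + T) = nat (a + T) + i * nat (poly qi d)"
    proof -
      have "a + T \<ge> 0" "int i * poly qi d \<ge> 0" using ad(1) Q(1) unfolding T_def by auto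
      hence "nat (a + T + int i * poly qi d) = nat (a + T) + nat (int i * poly qi d)" by (simp add: nat_add_distrib)
      moreover have "nat (int i * poly qi d) = i * nat (poly qi d)" by (simp add: nat_mult_distrib)
      moreover have "a + int i * poly qi d + T = a + T + int i * poly qi d" by simp
      ultimately show ?thesis by simp
    qed
    ultimately show "chi (nat (a + T) + i * nat (poly qi d)) = chi (nat (a + T))"
      by (simp add: \<chi>_def)
  qed
qed

lemma lcmap: "lead_coeff (map_poly (of_int :: int \<Rightarrow> 'a::{ring_char_0}) qi) = of_int (lead_coeff qi)"
  by (simp add: coeff_map_poly degree_map_poly)

lemma denom_exists:
  fixes p :: "rat poly"
  shows "\<exists>M::nat. M \<ge> 1 \<and> (\<forall>i. coeff p i * of_nat M \<in> \<int>)"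
proof -
  define b where "b = (\<lambda>i. snd (quotient_of (coeff p i)))"
  define M' where "M' = (\<Prod>i\<le>degree p. b i)"
  have bpos: "b i > 0" for i unfolding b_def by (simp add: quotient_of_denom_pos')
  have M'pos: "M' > 0" unfolding M'_def using bpos by (intro prod_pos) auto
  have "coeff p i * of_int M' \<in> \<int>" for i
  proof (cases "i \<le> degree p")
    case True
    hence "b i dvd M'" unfolding M'_def by (intro dvd_prodI) auto
    then obtain m where m: "M' = b i * m" by blast
    obtain a where a: "coeff p i = of_int a / of_int (b i)"
      unfolding b_def by (metis prod.collapse quotient_of_div)
    have "coeff p i * of_int M' = of_int a * of_int m" using bpos[of i] by (simp add: a m)
    thus ?thesis by simp
  next
    case False thus ?thesis by (simp add: coeff_eq_0)
  qed
  thus ?thesis using M'pos by (intro exI[of _ "nat M'"]) auto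
qed

theorem mainTheorem6:
  fixes p :: "rat poly"
  assumes "lead_coeff p > 0" and "poly p 0 = 0"
  shows "large {m :: nat. m \<ge> 1 \<and> (\<exists>n :: nat. n \<ge> 1 \<and> of_nat m = poly p (of_nat n))}"
proof -
  obtain M :: nat where M: "M \<ge> 1" "\<And>i. coeff p i * of_nat M \<in> \<int>" using denom_exists by blast
  define rp where "rp = pcompose p [:0, of_nat M:]"
  have c0: "coeff p 0 = 0" using assms(2) by (simp add: poly_0_coeff_0)
  have "coeff rp i \<in> \<int>" for i
  proof (cases i)
    case 0 thus ?thesis by (simp add: rp_def coeff_pcompose_linear c0 assms(2))
  next
    case (Suc j)
    have "coeff rp i = of_nat M ^ j * (coeff p i * of_nat M)"
      by (simp add: rp_def coeff_pcompose_linear Suc mult_ac)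
    thus ?thesis using M(2)[of i] by simp
  qed
  then obtain qi where qi: "rp = map_poly of_int qi" by (erule intpolyE)
  have polyq: "rat_of_int (poly qi x) = poly p (of_nat M * of_int x)" for x
  proof -
    have "rat_of_int (poly qi x) = poly rp (of_int x)" using poly_of_int_map[of qi x, where 'a = rat] qi by simp
    also have "\<dots> = poly p (of_nat M * of_int x)" by (simp add: rp_def poly_pcompose mult_ac)
    finally show ?thesis .
  qed
  have q0: "poly qi 0 = 0" using polyq[of 0] assms(2) by simp
  have "lead_coeff rp = lead_coeff p * of_nat M ^ degree p"
    unfolding rp_def using M by (subst lead_coeff_comp) auto
  hence "lead_coeff rp > 0" using assms(1) M by simp
  hence lcq: "lead_coeff qi > 0" using lcmap[of qi, where 'a = rat] qi by simp
  have "lead_coeff (map_poly (of_int :: int \<Rightarrow> real) qi) > 0" using lcq lcmap[of qi, where 'a = real] by simp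
  from poly_pinfty_gt_lc[OF this] obtain n0 :: real where
    n0: "\<And>x. x \<ge> n0 \<Longrightarrow> poly (map_poly of_int qi) x \<ge> lead_coeff (map_poly (of_int :: int \<Rightarrow> real) qi)" by blast
  define L where "L = max 1 \<lceil>n0\<rceil>"
  show ?thesis
  proof (rule large_from[OF q0, of L])
    show "0 \<le> L" by (simp add: L_def)
    fix d assume d: "L \<le> d"
    have "real_of_int d \<ge> n0" using d unfolding L_def by linarith
    hence "poly (map_poly of_int qi) (real_of_int d) > 0" using n0 lcq lcmap[of qi, where 'a = real] by force
    hence "real_of_int (poly qi d) > 0" by (simp add: poly_of_int_map)
    hence pos: "poly qi d \<ge> 1" by simp
    moreover have "nat (poly qi d) \<ge> 1 \<and> (\<exists>n::nat. n \<ge> 1 \<and> of_nat (nat (poly qi d)) = poly p (of_nat n))"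
    proof (intro conjI exI[of _ "M * nat d"])
      show "1 \<le> nat (poly qi d)" using pos by simp
      have "d \<ge> 1" using d unfolding L_def by simp
      thus "1 \<le> M * nat d" using M by simp
      have "rat_of_nat (nat (poly qi d)) = rat_of_int (poly qi d)" using pos by simp
      also have "\<dots> = poly p (of_nat (M * nat d))" using polyq[of d] \<open>d \<ge> 1\<close> by simp
      finally show "rat_of_nat (nat (poly qi d)) = poly p (rat_of_nat (M * nat d))" .
    qed
    ultimately show "1 \<le> poly qi d \<and> nat (poly qi d) \<in> {m. 1 \<le> m \<and> (\<exists>n\<ge>1. rat_of_nat m = poly p (rat_of_nat n))}"
      by simp
  qed
qed

end
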